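(* Let $m$ and $n_0$ be positive integers and $N=mn_0+m$. For $1\le\ell\le m$ let $R_\ell=\{m+(\ell-1)n_0+1,\dots,m+\ell n_0\}$. For $1\le j\le m$ and $1\le i_1<\cdots<i_j\le m$ let $X_{i_1,\dots,i_j}=\{Z\subseteq[N]:\ \{i_1,\dots,i_j\}\cup R_1\cup\cdots\cup R_{j-1}\subseteq Z\subseteq \{i_1,\dots,i_j\}\cup R_1\cup\cdots\cup R_j\}$. For any coloring $c$ of $\mathcal{B}_N$, if $\mathcal{B}_N$ contains no rainbow induced copy of $\mathcal{B}_m$, then there exist $j$ and $1\le i_1<\cdots<i_j\le m$ such that the restriction of $c$ to $X_{i_1,\dots,i_j}$ uses at most $2^m-1$ colors.
   Context: $\mathcal{B}_N$ is the Boolean lattice of subsets of $[N]$ under inclusion. A coloring assigns a color to each set (any number of colors allowed). An induced copy of a poset $\mathcal{P}$ in $\mathcal{B}_N$ is the image of an injection $f$ with $f(X)\subseteq f(Y)$ iff $X\le Y$; it is rainbow if its sets have pairwise distinct colors. *)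

theory Defs
  imports Main
begin

text \<open>The Boolean lattice B_N is Pow {1..N}, ordered by inclusion.\<close>

definition induced_copy_Bm :: "nat \<Rightarrow> nat \<Rightarrow> (nat set \<Rightarrow> nat set) \<Rightarrow> bool" where
  "induced_copy_Bm N m f \<longleftrightarrow>
     (\<forall>X\<in>Pow {1..m}. f X \<in> Pow {1..N}) \<and>
     inj_on f (Pow {1..m}) \<and>
     (\<forall>X\<in>Pow {1..m}. \<forall>Y\<in>Pow {1..m}. (f X \<subseteq> f Y \<longleftrightarrow> X \<subseteq> Y))"

definition rainbow :: "(nat set \<Rightarrow> 'c) \<Rightarrow> nat set set \<Rightarrow> bool" where
  "rainbow c S \<longleftrightarrow> inj_on c S"

definition has_rainbow_Bm :: "nat \<Rightarrow> nat \<Rightarrow> (nat set \<Rightarrow> 'c) \<Rightarrow> bool" where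
  "has_rainbow_Bm N m c \<longleftrightarrow>
     (\<exists>f. induced_copy_Bm N m f \<and> rainbow c (f ` Pow {1..m}))"

definition Rblk :: "nat \<Rightarrow> nat \<Rightarrow> nat \<Rightarrow> nat set" where
  "Rblk m n0 l = {m + (l - 1) * n0 + 1 .. m + l * n0}"

text \<open>X for index set I = {i_1 < ... < i_j}, with j = card I.\<close>
definition Xset :: "nat \<Rightarrow> nat \<Rightarrow> nat set \<Rightarrow> nat set set" where
  "Xset m n0 I = {Z. I \<union> (\<Union>l\<in>{1..<card I}. Rblk m n0 l) \<subseteq> Z \<and>
                     Z \<subseteq> I \<union> (\<Union>l\<in>{1..card I}. Rblk m n0 l)}"

end

theory Submission
  imports Defs
begin

lemma greedy_choice:
  assumes "finite K"
  shows "(\<forall>k\<in>K. card K \<le> card (c ` A k)) \<Longrightarrow>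
         \<exists>g. (\<forall>k\<in>K. g k \<in> A k) \<and> inj_on (c \<circ> g) K"
  using assms
proof (induction K rule: finite_induct)
  case empty
  then show ?case by auto
next
  case (insert k K)
  have cK: "card (insert k K) = card K + 1" using insert by simp
  have P: "\<And>x. x \<in> insert k K \<Longrightarrow> card K + 1 \<le> card (c ` A x)" using insert.prems cK by metis
  have "\<forall>k\<in>K. card K \<le> card (c ` A k)" using P by fastforce
  then obtain g where g: "\<forall>k\<in>K. g k \<in> A k" "inj_on (c \<circ> g) K" using insert.IH by blast
  have ck: "card K + 1 \<le> card (c ` A k)" using P by blast
  hence fin: "finite (c ` A k)" by (intro card_ge_0_finite) linarith
  have "card ((c \<circ> g) ` K) \<le> card K" using insert.hyps card_image_le by blast
  have "\<not> c ` A k \<subseteq> (c \<circ> g) ` K"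
    proof
    assume "c ` A k \<subseteq> (c \<circ> g) ` K"
    hence "card (c ` A k) \<le> card ((c \<circ> g) ` K)" using insert.hyps(1) by (simp add: card_mono)
    thus False using ck \<open>card ((c \<circ> g) ` K) \<le> card K\<close> by linarith
  qed
  then obtain a where a: "a \<in> A k" "c a \<notin> (c \<circ> g) ` K" by blast
  let ?g = "g(k := a)"
  have "\<forall>x\<in>insert k K. ?g x \<in> A x" using g a insert.hyps by auto
  moreover have "inj_on (c \<circ> ?g) (insert k K)"
  proof -
    have e: "(c \<circ> ?g) ` K = (c \<circ> g) ` K" using insert.hyps by auto
    have "inj_on (c \<circ> ?g) K" using g(2) insert.hyps
      by (smt (verit, best) comp_apply fun_upd_other inj_on_cong)
    thus ?thesis using a e by (simp add: insert.hyps)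
  qed
  ultimately show ?case by blast
qed

lemma Xset_lo: "Z \<in> Xset m n0 I \<Longrightarrow> I \<union> (\<Union>l\<in>{1..<card I}. Rblk m n0 l) \<subseteq> Z"
  unfolding Xset_def by (drule CollectD) (erule conjunct1)
lemma Xset_hi: "Z \<in> Xset m n0 I \<Longrightarrow> Z \<subseteq> I \<union> (\<Union>l\<in>{1..card I}. Rblk m n0 l)"
  unfolding Xset_def by (drule CollectD) (erule conjunct2)

lemma Rblk_sub:
  assumes "1 \<le> l" "l \<le> m"
  shows "Rblk m n0 l \<subseteq> {m+1..m*n0+m}"
proof -
  have "l * n0 \<le> m * n0" using assms by simp
  thus ?thesis unfolding Rblk_def by auto
qed

lemma Xset_props:
  assumes "I \<subseteq> {1..m}" "Z \<in> Xset m n0 I"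
  shows "Z \<inter> {1..m} = I" "Z \<subseteq> {1..m*n0+m}"
proof -
  have cI: "card I \<le> m" using assms(1) by (metis card_atLeastAtMost card_mono finite_atLeastAtMost diff_Suc_1 Suc_eq_plus1)
  have U: "(\<Union>l\<in>{1..card I}. Rblk m n0 l) \<subseteq> {m+1..m*n0+m}"
    using Rblk_sub cI by (meson UN_least atLeastAtMost_iff le_trans)
  have Z: "I \<subseteq> Z" "Z \<subseteq> I \<union> (\<Union>l\<in>{1..card I}. Rblk m n0 l)"
    using Xset_lo[OF assms(2)] Xset_hi[OF assms(2)] by auto
  show "Z \<inter> {1..m} = I"
  proof
    show "Z \<inter> {1..m} \<subseteq> I"
    proof
      fix x assume x: "x \<in> Z \<inter> {1..m}"
      show "x \<in> I"
      proof (rule ccontr)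
        assume "x \<notin> I"
        hence "x \<in> {m+1..m*n0+m}" using x Z U by blast
        thus False using x by simp
      qed
    qed
  qed (use Z assms(1) in auto)
  have "{m+1..m*n0+m} \<subseteq> {1..m*n0+m}" "{1..m} \<subseteq> {1..m*n0+m}" by auto
  thus "Z \<subseteq> {1..m*n0+m}" using Z U assms(1) by blast
qed

lemma Xset_mono:
  assumes "I \<subset> J" "J \<subseteq> {1..m}" "Z \<in> Xset m n0 I" "W \<in> Xset m n0 J"
  shows "Z \<subseteq> W"
proof -
  have fJ: "finite J" using assms(2) finite_subset by blast
  have "card I < card J" using assms(1) fJ psubset_card_mono by blast
  hence "{1..card I} \<subseteq> {1..<card J}" by auto
  hence "(\<Union>l\<in>{1..card I}. Rblk m n0 l) \<subseteq> (\<Union>l\<in>{1..<card J}. Rblk m n0 l)" by blast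
  moreover have "Z \<subseteq> I \<union> (\<Union>l\<in>{1..card I}. Rblk m n0 l)" using Xset_hi[OF assms(3)] .
  moreover have "J \<union> (\<Union>l\<in>{1..<card J}. Rblk m n0 l) \<subseteq> W" using Xset_lo[OF assms(4)] .
  ultimately show ?thesis using assms(1)
    by (meson Un_mono order_trans psubset_imp_subset)
qed

theorem lemma4p1:
  fixes m n0 N :: nat and c :: "nat set \<Rightarrow> 'c"
  assumes "m \<ge> 1" and "n0 \<ge> 1" and "N = m * n0 + m"
    and "\<not> has_rainbow_Bm N m c"
  shows "\<exists>I. I \<subseteq> {1..m} \<and> 1 \<le> card I \<and>
             card (c ` Xset m n0 I) \<le> 2 ^ m - 1"
proof (rule ccontr)
  assume H: "\<not> ?thesis"
  let ?K = "Pow {1..m} - {{}}"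
  let ?A = "\<lambda>I. Xset m n0 I - c -` {c {}}"
  have cardK: "card ?K = 2 ^ m - 1"
    by (simp add: card_Diff_singleton card_Pow)
  have big: "\<forall>I\<in>?K. card ?K \<le> card (c ` ?A I)"
  proof
    fix I assume I: "I \<in> ?K"
    hence "I \<subseteq> {1..m}" "I \<noteq> {}" by auto
    moreover have "finite I" using calculation(1) finite_subset by blast
    ultimately have "1 \<le> card I" by (simp add: Suc_leI card_gt_0_iff)
    hence c1: "2 ^ m - 1 < card (c ` Xset m n0 I)" using H \<open>I \<subseteq> {1..m}\<close> by force
    have "c ` ?A I = c ` Xset m n0 I - {c {}}" by auto
    hence "card (c ` ?A I) \<ge> card (c ` Xset m n0 I) - 1"
      by (metis card_Diff_singleton_if diff_le_self order_refl)
    thus "card ?K \<le> card (c ` ?A I)" using c1 cardK by linarith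
  qed
  obtain g where g: "\<forall>I\<in>?K. g I \<in> ?A I" "inj_on (c \<circ> g) ?K"
    using greedy_choice[of ?K c ?A] big by auto
  define f where "f = g({} := {})"
  have fX: "\<And>X. X \<in> Pow {1..m} \<Longrightarrow> X \<noteq> {} \<Longrightarrow> f X \<in> Xset m n0 X \<and> c (f X) \<noteq> c {}"
    using g(1) unfolding f_def by auto
  have inter: "\<And>X. X \<in> Pow {1..m} \<Longrightarrow> f X \<inter> {1..m} = X"
    by (metis Int_empty_left PowD Xset_props(1) f_def fX fun_upd_same)
  have sub: "\<And>X. X \<in> Pow {1..m} \<Longrightarrow> f X \<in> Pow {1..N}"
    by (metis Pow_iff Xset_props(2) assms(3) empty_subsetI f_def fX fun_upd_same)
  have ord: "\<And>X Y. X \<in> Pow {1..m} \<Longrightarrow> Y \<in> Pow {1..m} \<Longrightarrow> f X \<subseteq> f Y \<longleftrightarrow> X \<subseteq> Y"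
  proof
    fix X Y assume X: "X \<in> Pow {1..m}" and Y: "Y \<in> Pow {1..m}"
    show "f X \<subseteq> f Y \<Longrightarrow> X \<subseteq> Y" using inter[OF X] inter[OF Y] by blast
    assume XY: "X \<subseteq> Y"
    show "f X \<subseteq> f Y"
    proof (cases "X = {}")
      case True thus ?thesis by (simp add: f_def)
    next
      case False
      show ?thesis
      proof (cases "X = Y")
        case True thus ?thesis by simp
      next
        case ne: False
        hence "X \<subset> Y" using XY by blast
        moreover have "Y \<noteq> {}" using False XY by blast
        ultimately show ?thesis using Xset_mono fX X Y False by blast
      qed
    qed
  qed
  have inj: "inj_on f (Pow {1..m})"
    by (metis inter inj_onI)
  have col: "\<And>X Y. X \<in> Pow {1..m} \<Longrightarrow> Y \<in> Pow {1..m} \<Longrightarrow> c (f X) = c (f Y) \<Longrightarrow> X = Y"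
  proof -
    fix X Y assume X: "X \<in> Pow {1..m}" and Y: "Y \<in> Pow {1..m}" and e: "c (f X) = c (f Y)"
    show "X = Y"
    proof (cases "X = {}"; cases "Y = {}")
      assume "X \<noteq> {}" "Y \<noteq> {}"
      hence "X \<in> ?K" "Y \<in> ?K" using X Y by auto
      moreover have "(c \<circ> g) X = (c \<circ> g) Y" using e \<open>X \<noteq> {}\<close> \<open>Y \<noteq> {}\<close> by (simp add: f_def)
      ultimately show ?thesis using g(2) by (meson inj_onD)
    next
      assume "X = {}" "Y = {}" thus ?thesis by simp
    next
      assume a: "X = {}" "Y \<noteq> {}"
      hence "c (f Y) \<noteq> c {}" using fX Y by blast
      thus ?thesis using a e by (simp add: f_def)
    next
      assume a: "X \<noteq> {}" "Y = {}"
      hence "c (f X) \<noteq> c {}" using fX X by blast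
      thus ?thesis using a e by (simp add: f_def)
    qed
  qed
  have "induced_copy_Bm N m f" unfolding induced_copy_Bm_def
    using sub inj ord by (intro conjI ballI) auto
  moreover have "rainbow c (f ` Pow {1..m})" unfolding rainbow_def
  proof (rule inj_onI)
    fix u v assume "u \<in> f ` Pow {1..m}" "v \<in> f ` Pow {1..m}" "c u = c v"
    then obtain X Y where "X \<in> Pow {1..m}" "Y \<in> Pow {1..m}" "u = f X" "v = f Y" "c (f X) = c (f Y)"
      by blast
    thus "u = v" using col by metis
  qed
  ultimately have "has_rainbow_Bm N m c" unfolding has_rainbow_Bm_def by (intro exI[of _ f]) simp
  thus False using assms(4) by simp
qed

end
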